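(* Let $n\in\mathbb{N}_0$ and let $p\in\mathbb{N}_0$ with $p\ge n$. Let $\psi_{p,n}$ denote the $n$-th primitive of the Legendre polynomial $L_p$. Then \[ \int_{-1}^1\psi_{p,n}(x)^2\,dx=\frac{2^{n+1}}{n!}\,\frac{1}{2p+1}\prod_{k=1}^n\frac{2k-1}{(2p+1)^2-4k^2}. \]
   Context: $L_j$ denotes the Legendre polynomial of degree $j$ on $(-1,1)$, normalized so that $L_j(1)=1$ and $\int_{-1}^1L_iL_j=\frac{2}{2i+1}\delta_{ij}$. The $n$-th primitive is defined recursively by $\psi_{i,0}:=L_i$ and $\psi_{i,n}(x):=\int_{-1}^x\psi_{i,n-1}(\zeta)\,d\zeta$ for $n\ge1$. *)

theory Defs
  imports "HOL-Analysis.Analysis"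
begin

fun legendre :: "nat \<Rightarrow> real \<Rightarrow> real" where
  "legendre 0 x = 1"
| "legendre (Suc 0) x = x"
| "legendre (Suc (Suc j)) x =
     ((2 * real j + 3) * x * legendre (Suc j) x - (real j + 1) * legendre j x) / (real j + 2)"

fun psi :: "nat \<Rightarrow> nat \<Rightarrow> real \<Rightarrow> real" where
  "psi i 0 = legendre i"
| "psi i (Suc n) = (\<lambda>x. integral {-1..x} (psi i n))"

end

theory Submission
  imports Defs
begin

fun dL :: "nat \<Rightarrow> real \<Rightarrow> real" where
  "dL 0 x = 0"
| "dL (Suc 0) x = 1"
| "dL (Suc (Suc j)) x =
     ((2 * real j + 3) * (legendre (Suc j) x + x * dL (Suc j) x) - (real j + 1) * dL j x) / (real j + 2)"

lemma legendre_deriv: "(legendre q has_real_derivative dL q x) (at x)"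
proof (induction q x rule: legendre.induct)
  case (1 x) then show ?case by simp
next
  case (2 x) then show ?case by (auto intro!: derivative_eq_intros)
next
  case (3 j y)
  have "((\<lambda>y. (2 * real j + 3) * y * legendre (Suc j) y - (real j + 1) * legendre j y) has_real_derivative
     ((2 * real j + 3) * (legendre (Suc j) y + y * dL (Suc j) y) - (real j + 1) * dL j y)) (at y)"
    by (rule derivative_eq_intros refl 3 | simp add: algebra_simps)+
  from DERIV_cdivide[OF this, of "real j + 2"] show ?case by simp
qed

lemma bonnet: "(real q + 1) * legendre (Suc q) x = (2 * real q + 1) * x * legendre q x - real q * legendre (q - 1) x"
proof (cases q)
  case 0 then show ?thesis by simp
next
  case (Suc j) then show ?thesis by (simp add: field_simps)
qed

lemma BD: "dL (Suc q) x = x * dL q x + (real q + 1) * legendre q x \<and>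
   (x^2 - 1) * dL q x = real q * (x * legendre q x - legendre (q - 1) x)"
proof (induction q)
  case 0 then show ?case by simp
next
  case (Suc q)
  have B: "dL (Suc q) x = x * dL q x + (real q + 1) * legendre q x" using Suc by blast
  have D: "(x^2 - 1) * dL q x = real q * (x * legendre q x - legendre (q - 1) x)" using Suc by blast
  have bq: "(real q + 1) * legendre (Suc q) x = (2 * real q + 1) * x * legendre q x - real q * legendre (q - 1) x"
    by (rule bonnet)
  have C: "x * dL (Suc q) x - dL q x = (real q + 1) * legendre (Suc q) x"
  proof -
    have "x * dL (Suc q) x - dL q x = (x^2 - 1) * dL q x + (real q + 1) * x * legendre q x"
      using B by (simp add: algebra_simps power2_eq_square)
    also have "\<dots> = (real q + 1) * legendre (Suc q) x" using D bq by (simp add: algebra_simps)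
    finally show ?thesis .
  qed
  have B2: "dL (Suc (Suc q)) x = x * dL (Suc q) x + (real (Suc q) + 1) * legendre (Suc q) x"
  proof -
    have "(real q + 2) * dL (Suc (Suc q)) x = (2 * real q + 3) * (legendre (Suc q) x + x * dL (Suc q) x) - (real q + 1) * dL q x"
      by simp
    also have "\<dots> = (real q + 2) * (x * dL (Suc q) x + (real (Suc q) + 1) * legendre (Suc q) x)"
      using C by (simp add: algebra_simps power2_eq_square) 
    finally show ?thesis by simp
  qed
  have D2: "(x^2 - 1) * dL (Suc q) x = real (Suc q) * (x * legendre (Suc q) x - legendre (Suc q - 1) x)"
  proof -
    have "(x^2 - 1) * dL (Suc q) x = x * ((x^2 - 1) * dL q x) + (real q + 1) * (x^2 - 1) * legendre q x"
      using B by (simp add: algebra_simps)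
    also have "\<dots> = (real q + 1) * (x * legendre (Suc q) x - legendre q x)"
      using D bq by algebra
    finally show ?thesis by simp
  qed
  show ?case using B2 D2 by blast
qed

lemma C_id: "x * dL q x - dL (q - 1) x = real q * legendre q x"
proof (cases q)
  case 0 then show ?thesis by simp
next
  case (Suc j)
  have B: "dL (Suc j) x = x * dL j x + (real j + 1) * legendre j x" using BD by blast
  have D: "(x^2 - 1) * dL j x = real j * (x * legendre j x - legendre (j - 1) x)" using BD by blast
  have bq: "(real j + 1) * legendre (Suc j) x = (2 * real j + 1) * x * legendre j x - real j * legendre (j - 1) x"
    by (rule bonnet)
  have "x * dL (Suc j) x - dL j x = (x^2 - 1) * dL j x + (real j + 1) * x * legendre j x"
    using B by (simp add: algebra_simps power2_eq_square)
  also have "\<dots> = (real j + 1) * legendre (Suc j) x" using D bq by (simp add: algebra_simps)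
  finally show ?thesis using Suc by simp
qed

lemma A_id: "q \<ge> 1 \<Longrightarrow> dL (Suc q) x - dL (q - 1) x = (2 * real q + 1) * legendre q x"
  using BD[where q=q and x=x] C_id[where q=q and x=x] by (simp add: algebra_simps)

lemma legendre_1': "legendre q 1 = 1 \<and> legendre (Suc q) 1 = 1"
  by (induction q) (simp_all add: field_simps)

lemma legendre_1: "legendre q 1 = 1"
  using legendre_1' by blast

lemma legendre_m1': "legendre q (-1) = (-1) ^ q \<and> legendre (Suc q) (-1) = (-1) ^ Suc q"
  by (induction q) (simp_all add: field_simps)

lemma legendre_m1: "legendre q (-1) = (-1) ^ q"
  using legendre_m1' by blast

lemma ftc_real:
  fixes F f :: "real \<Rightarrow> real"
  assumes "a \<le> b" "\<And>x. (F has_real_derivative f x) (at x)"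
  shows "(f has_integral (F b - F a)) {a..b}"
  apply (rule fundamental_theorem_of_calculus[OF assms(1)])
  unfolding has_real_derivative_iff_has_vector_derivative[symmetric]
  using assms(2) by (blast intro: has_field_derivative_at_within)

definition Lz :: "int \<Rightarrow> real \<Rightarrow> real" where
  "Lz q x = (if 0 \<le> q then legendre (nat q) x else - legendre (nat (- q - 1)) x)"

definition dLz :: "int \<Rightarrow> real \<Rightarrow> real" where
  "dLz q x = (if 0 \<le> q then dL (nat q) x else - dL (nat (- q - 1)) x)"

lemma Lz_deriv: "(Lz q has_real_derivative dLz q x) (at x)"
  unfolding Lz_def[abs_def] dLz_def
  by (cases "0 \<le> q") (auto intro!: derivative_eq_intros legendre_deriv)

lemma Az: "dLz (q + 1) x - dLz (q - 1) x = (2 * of_int q + 1) * Lz q x"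
proof -
  consider "q \<ge> 1" | "q = 0" | "q = -1" | "q \<le> -2" by linarith
  then show ?thesis
  proof cases
    case 1
    define k where "k = nat q"
    have k: "q = int k" "k \<ge> 1" using 1 by (auto simp: k_def)
    have "nat (q + 1) = Suc k" "nat (q - 1) = k - 1" "nat q = k" using k by auto
    then show ?thesis using A_id[of k x] k unfolding dLz_def Lz_def by simp
  next
    case 2 then show ?thesis unfolding dLz_def Lz_def by simp
  next
    case 3 then show ?thesis unfolding dLz_def Lz_def by simp
  next
    case 4
    define r where "r = nat (- q - 1)"
    have r: "r \<ge> 1" "nat (- (q + 1) - 1) = r - 1" "nat (- (q - 1) - 1) = Suc r"
      using 4 by (auto simp: r_def)
    have hq: "real_of_int q = - real r - 1" using 4 by (simp add: r_def)
    have "dL (Suc r) x - dL (r - 1) x = (2 * real r + 1) * legendre r x" using A_id[of r x] r by simp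
    then show ?thesis using r 4 unfolding dLz_def Lz_def r_def[symmetric] by (simp add: hq algebra_simps)
  qed
qed

lemma Lz_1: "Lz q 1 = (if 0 \<le> q then 1 else -1)"
  unfolding Lz_def by (simp add: legendre_1)

lemma Lz_m1_eq: "Lz (q + 1) (-1) = Lz (q - 1) (-1)"
proof -
  consider "q \<ge> 1" | "q = 0" | "q = -1" | "q \<le> -2" by linarith
  then show ?thesis
  proof cases
    case 1
    then have "nat (q + 1) = Suc (Suc (nat (q - 1)))" by auto
    then show ?thesis using 1 unfolding Lz_def by (simp add: legendre_m1)
  next
    case 2 then show ?thesis unfolding Lz_def by (simp add: legendre_m1)
  next
    case 3 then show ?thesis unfolding Lz_def by (simp add: legendre_m1)
  next
    case 4
    then have "nat (- (q - 1) - 1) = Suc (Suc (nat (- (q + 1) - 1)))" by auto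
    then show ?thesis using 4 unfolding Lz_def by (simp add: legendre_m1)
  qed
qed

lemma odd_nz: "2 * real_of_int z + 1 \<noteq> 0"
proof
  assume "2 * real_of_int z + 1 = 0"
  then have "real_of_int (2 * z + 1) = 0" by simp
  then have "2 * z + 1 = 0" by linarith
  then show False by presburger
qed

lemma Lz_integral:
  assumes "-1 \<le> x"
  shows "(Lz q has_integral (Lz (q + 1) x - Lz (q - 1) x) / (2 * of_int q + 1)) {-1..x}"
proof -
  have "((\<lambda>y. (Lz (q + 1) y - Lz (q - 1) y) / (2 * of_int q + 1)) has_real_derivative Lz q y) (at y)" for y
  proof -
    have "((\<lambda>y. (Lz (q + 1) y - Lz (q - 1) y) / (2 * of_int q + 1)) has_real_derivative
       (dLz (q + 1) y - dLz (q - 1) y) / (2 * of_int q + 1)) (at y)"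
      by (intro DERIV_cdivide DERIV_diff Lz_deriv)
    then show ?thesis using Az[of q y] odd_nz[of q] by simp
  qed
  from ftc_real[OF assms this] show ?thesis using Lz_m1_eq[of q] by (simp add: diff_divide_distrib)
qed

lemma legendre_cont: "continuous_on S (legendre q)"
  by (meson DERIV_isCont continuous_at_imp_continuous_on legendre_deriv)

lemma Lz_cont: "continuous_on S (Lz q)"
  by (meson DERIV_isCont continuous_at_imp_continuous_on Lz_deriv)

lemma cont_int: "continuous_on {a..b} f \<Longrightarrow> f integrable_on {a..b}"
  for f :: "real \<Rightarrow> real" by (rule integrable_continuous_interval)

lemma leg_prod_int: "(\<lambda>x. h x * legendre q x * legendre r x) integrable_on {a..b}" if "continuous_on {a..b} h"
  by (intro cont_int continuous_intros legendre_cont that)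

lemma ortho_W:
  "((\<lambda>x. real q * (legendre (q - 1) x - x * legendre q x) * legendre r x
        - real r * (legendre (r - 1) x - x * legendre r x) * legendre q x)
     has_real_derivative ((real r * (real r + 1) - real q * (real q + 1)) * (legendre q x * legendre r x))) (at x)"
proof -
  have Cq: "dL (q - 1) x = x * dL q x - real q * legendre q x" using C_id[of x q] by simp
  have Cr: "dL (r - 1) x = x * dL r x - real r * legendre r x" using C_id[of x r] by simp
  have Dq: "real q * (legendre (q - 1) x - x * legendre q x) = (1 - x^2) * dL q x" using BD[of q x] by (simp add: algebra_simps)
  have Dr: "real r * (legendre (r - 1) x - x * legendre r x) = (1 - x^2) * dL r x" using BD[of r x] by (simp add: algebra_simps)
  show ?thesis
    apply (rule derivative_eq_intros legendre_deriv refl)+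
    using Cq Cr Dq Dr by algebra
qed

lemma legendre_ortho:
  assumes "q \<noteq> r"
  shows "integral {-1..1} (\<lambda>x. legendre q x * legendre r x) = 0"
proof -
  define c where "c = real r * (real r + 1) - real q * (real q + 1)"
  have c: "c \<noteq> 0"
  proof
    assume "c = 0"
    then have "real (r * (r + 1)) = real (q * (q + 1))" by (simp add: c_def algebra_simps)
    then have "r * (r + 1) = q * (q + 1)" by (simp only: of_nat_eq_iff)
    moreover have "q < r \<Longrightarrow> q * (q + 1) < r * (r + 1)" by (intro mult_strict_mono) auto
    moreover have "r < q \<Longrightarrow> r * (r + 1) < q * (q + 1)" by (intro mult_strict_mono) auto
    ultimately show False using assms by (metis less_irrefl nat_neq_iff)
  qed
  define W where "W = (\<lambda>x. real q * (legendre (q - 1) x - x * legendre q x) * legendre r x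
        - real r * (legendre (r - 1) x - x * legendre r x) * legendre q x)"
  have W1: "W 1 = 0" by (simp add: W_def legendre_1)
  have Wm1: "W (-1) = 0"
  proof -
    have "real k * (legendre (k - 1) (-1) + legendre k (-1)) = 0" for k
      by (cases k) (auto simp: legendre_m1)
    then show ?thesis unfolding W_def by (simp add: algebra_simps)
  qed
  have "((\<lambda>x. c * (legendre q x * legendre r x)) has_integral W 1 - W (-1)) {-1..1}"
    unfolding W_def c_def by (rule ftc_real) (simp, rule ortho_W)
  then have "((\<lambda>x. c * (legendre q x * legendre r x)) has_integral 0) {-1..1}"
    using W1 Wm1 by simp
  then have "integral {-1..1} (\<lambda>x. c * (legendre q x * legendre r x)) = 0"
    by (rule integral_unique)
  then show ?thesis using c by simp
qed

lemma legendre_norm: "integral {-1..1} (\<lambda>x. legendre q x * legendre q x) = 2 / (2 * real q + 1)"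
proof (induction q)
  case 0
  then show ?case by simp
next
  case (Suc q)
  define N where "N k = integral {-1..1} (\<lambda>x. legendre k x * legendre k x)" for k
  define X where "X = integral {-1..1} (\<lambda>x. x * legendre q x * legendre (Suc q) x)"
  have ci: "continuous_on {-1..1} (\<lambda>x::real. x)" "continuous_on {-1..1} (\<lambda>x::real. 1::real)"
    by (intro continuous_intros)+
  note ii = leg_prod_int[OF ci(1)] leg_prod_int[OF ci(2)]
  have e1: "(real q + 1) * N (Suc q) = (2 * real q + 1) * X"
  proof -
    have "(real q + 1) * N (Suc q) = integral {-1..1} (\<lambda>x. ((real q + 1) * legendre (Suc q) x) * legendre (Suc q) x)"
      unfolding N_def by (simp add: mult.assoc)
    also have "\<dots> = integral {-1..1} (\<lambda>x. (2 * real q + 1) * (x * legendre q x * legendre (Suc q) x)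
         - real q * (1 * legendre (q - 1) x * legendre (Suc q) x))"
      by (rule integral_cong) (subst bonnet, simp add: algebra_simps)
    also have "\<dots> = (2 * real q + 1) * X - real q * integral {-1..1} (\<lambda>x. legendre (q - 1) x * legendre (Suc q) x)"
      by (subst integral_diff) (auto intro!: cont_int continuous_intros legendre_cont simp: X_def)
    also have "\<dots> = (2 * real q + 1) * X" using legendre_ortho[of "q - 1" "Suc q"] by simp
    finally show ?thesis .
  qed
  have e2: "(2 * real q + 3) * X = (real q + 1) * N q"
  proof -
    have "0 = integral {-1..1} (\<lambda>x. ((real (Suc q) + 1) * legendre (Suc (Suc q)) x) * legendre q x)"
      using legendre_ortho[of "Suc (Suc q)" q] by (simp add: mult.assoc del: legendre.simps)
    also have "\<dots> = integral {-1..1} (\<lambda>x. (2 * real q + 3) * (x * legendre q x * legendre (Suc q) x)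
         - (real q + 1) * (1 * legendre q x * legendre q x))"
      by (rule integral_cong) (subst bonnet[of "Suc q"], simp add: algebra_simps)
    also have "\<dots> = (2 * real q + 3) * X - (real q + 1) * N q"
      by (subst integral_diff) (auto intro!: cont_int continuous_intros legendre_cont simp: X_def N_def)
    finally show ?thesis by simp
  qed
  have Nq: "N q = 2 / (2 * real q + 1)" using Suc by (simp add: N_def)
  have X: "X = (real q + 1) * N q / (2 * real q + 3)" using e2 by (simp add: field_simps)
  have NS: "N (Suc q) = (2 * real q + 1) * X / (real q + 1)" using e1 by (simp add: field_simps)
  have "N (Suc q) = (2 * real q + 1) * ((real q + 1) * (2 / (2 * real q + 1)) / (2 * real q + 3)) / (real q + 1)"
    unfolding NS X Nq ..
  also have "\<dots> = 2 / (2 * real (Suc q) + 1)"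
  proof -
    have "2 * real q + 1 \<noteq> 0" "real q + 1 \<noteq> 0" "2 * real q + 3 \<noteq> 0" by linarith+
    then have "(2 * real q + 1) * ((real q + 1) * (2 / (2 * real q + 1)) / (2 * real q + 3)) / (real q + 1) = 2 / (2 * real q + 3)"
      by (simp add: divide_simps)
    moreover have "2 * real (Suc q) + 1 = 2 * real q + 3" by simp
    ultimately show ?thesis by simp
  qed
  finally have "N (Suc q) = 2 / (2 * real (Suc q) + 1)" .
  then show ?case by (simp add: N_def)
qed

definition idx :: "nat \<Rightarrow> nat \<Rightarrow> nat \<Rightarrow> int" where
  "idx p m j = int p - int m + 2 * int j"

fun cr :: "nat \<Rightarrow> nat \<Rightarrow> nat \<Rightarrow> real" where
  "cr p 0 j = (if j = 0 then 1 else 0)"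
| "cr p (Suc m) j = (if 1 \<le> j then cr p m (j - 1) / (2 * of_int (idx p m (j - 1)) + 1) else 0)
     - (if j \<le> m then cr p m j / (2 * of_int (idx p m j) + 1) else 0)"

lemma psi_expand:
  assumes "-1 \<le> x"
  shows "psi p m x = (\<Sum>j=0..m. cr p m j * Lz (idx p m j) x)"
  using assms
proof (induction m arbitrary: x)
  case 0
  then show ?case by (simp add: idx_def Lz_def)
next
  case (Suc m)
  define d where "d j = cr p m j / (2 * of_int (idx p m j) + 1)" for j
  have "psi p (Suc m) x = integral {-1..x} (psi p m)" by simp
  also have "\<dots> = integral {-1..x} (\<lambda>t. \<Sum>j=0..m. cr p m j * Lz (idx p m j) t)"
    by (rule integral_cong) (use Suc.IH in auto)
  also have "\<dots> = (\<Sum>j=0..m. cr p m j * ((Lz (idx p m j + 1) x - Lz (idx p m j - 1) x) / (2 * of_int (idx p m j) + 1)))"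
    by (intro integral_unique has_integral_sum finite_atLeastAtMost ballI has_integral_mult_right Lz_integral Suc.prems)
  also have "\<dots> = (\<Sum>j=0..m. d j * Lz (idx p m j + 1) x) - (\<Sum>j=0..m. d j * Lz (idx p m j - 1) x)"
    by (simp add: d_def sum_subtractf[symmetric] algebra_simps diff_divide_distrib)
  also have "\<dots> = (\<Sum>j=0..Suc m. cr p (Suc m) j * Lz (idx p (Suc m) j) x)"
  proof -
    have i1: "idx p (Suc m) (Suc j) = idx p m j + 1" for j by (simp add: idx_def)
    have i2: "idx p (Suc m) j = idx p m j - 1" for j by (simp add: idx_def)
    have A: "(\<Sum>j=0..Suc m. (if 1 \<le> j then d (j - 1) else 0) * Lz (idx p (Suc m) j) x)
        = (\<Sum>j=0..m. d j * Lz (idx p m j + 1) x)"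
      by (subst sum.atLeast0_atMost_Suc_shift) (simp add: i1)
    have B: "(\<Sum>j=0..Suc m. (if j \<le> m then d j else 0) * Lz (idx p (Suc m) j) x)
        = (\<Sum>j=0..m. d j * Lz (idx p m j - 1) x)"
      by (subst sum.atLeast0_atMost_Suc) (simp add: i2)
    have "(\<Sum>j=0..Suc m. cr p (Suc m) j * Lz (idx p (Suc m) j) x)
       = (\<Sum>j=0..Suc m. (if 1 \<le> j then d (j - 1) else 0) * Lz (idx p (Suc m) j) x
            - (if j \<le> m then d j else 0) * Lz (idx p (Suc m) j) x)"
      by (rule sum.cong) (auto simp: d_def algebra_simps)
    also have "\<dots> = (\<Sum>j=0..m. d j * Lz (idx p m j + 1) x) - (\<Sum>j=0..m. d j * Lz (idx p m j - 1) x)"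
      by (simp only: sum_subtractf A B)
    finally show ?thesis by simp
  qed
  finally show ?case .
qed

definition g :: "int \<Rightarrow> nat \<Rightarrow> real" where
  "g z m = (\<Prod>i=0..m. (2 * of_int (z + int i) + 1))"

definition cc :: "nat \<Rightarrow> nat \<Rightarrow> nat \<Rightarrow> real" where
  "cc p m j = (-1) ^ (m - j) * real (m choose j) * (2 * of_int (idx p m j) + 1) / g (int p - int m + int j) m"

lemma g_nz': "g z m \<noteq> 0"
  unfolding g_def apply (subst prod_zero_iff) apply simp using odd_nz by blast

lemma g_Suc: "g z (Suc m) = g z m * (2 * of_int (z + int m + 1) + 1)"
  unfolding g_def by (simp add: prod.atLeast0_atMost_Suc)

lemma g_shift: "g (z - 1) (Suc m) = (2 * of_int (z - 1) + 1) * g z m"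
  unfolding g_def by (subst prod.atLeast0_atMost_Suc_shift) (simp add: algebra_simps)

lemma aux1: "(c::real) \<noteq> 0 \<Longrightarrow> x * c / G / c = x / G" by simp

lemma cc_div: "cc p m j / (2 * of_int (idx p m j) + 1) = (-1) ^ (m - j) * real (m choose j) / g (int p - int m + int j) m"
  unfolding cc_def by (rule aux1[OF odd_nz])

lemma cr_cc: "j \<le> m \<Longrightarrow> cr p m j = cc p m j"
proof (induction m arbitrary: j)
  case 0
  then show ?case using odd_nz[of "int p"] by (simp add: cc_def g_def idx_def)
next
  case (Suc m)
  have "j = 0 \<or> (\<exists>i. j = Suc i \<and> i < m) \<or> j = Suc m" using Suc.prems by (cases j) auto
  then consider "j = 0" | i where "j = Suc i" "i < m" | "j = Suc m" by blast
  then show ?case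
  proof cases
    case 1
    define a where "a = int p - int m"
    have "cr p (Suc m) j = - ((-1) ^ m / g a m)"
      using Suc.IH[of 0] cc_div[of p m 0] 1 by (simp add: a_def)
    also have "\<dots> = cc p (Suc m) j"
    proof -
      have e: "int p - int (Suc m) + int 0 = a - 1" "idx p (Suc m) 0 = a - 1" by (simp_all add: a_def idx_def)
      show ?thesis unfolding cc_def 1 e g_shift using odd_nz[of "a - 1"] g_nz'[of a m]
        by simp
    qed
    finally show ?thesis .
  next
    case 3
    define a where "a = int p"
    have "cr p (Suc m) j = 1 / g a m"
      using Suc.IH[of m] cc_div[of p m m] 3 by (simp add: a_def)
    also have "\<dots> = cc p (Suc m) j"
    proof -
      have e: "int p - int (Suc m) + int (Suc m) = a" "idx p (Suc m) (Suc m) = a + int m + 1" by (simp_all add: a_def idx_def)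
      show ?thesis unfolding cc_def 3 e g_Suc using odd_nz[of "a + int m + 1"] g_nz'[of a m]
        by simp
    qed
    finally show ?thesis .
  next
    case 2
    define a where "a = int p - int m + int j"
    define s :: real where "s = (-1) ^ (m - i)"
    have s2: "(-1) ^ (m - j) = - s" 
    proof -
      have "m - i = Suc (m - j)" using 2 by simp
      then show ?thesis by (simp add: s_def)
    qed
    have s3: "(-1) ^ (Suc m - j) = s" using 2 by (simp add: s_def)
    have ea: "int p - int m + int i = a - 1" using 2 by (simp add: a_def)
    have "cr p (Suc m) j = s * real (m choose i) / g (a - 1) m + s * real (m choose j) / g a m"
      using Suc.IH[of i] Suc.IH[of j] cc_div[of p m i] cc_div[of p m j] 2 s2
      by (simp add: a_def ea s_def)
    also have "\<dots> = cc p (Suc m) j"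
    proof -
      define u where "u = 2 * of_int (a - 1) + (1::real)"
      define v where "v = 2 * of_int (a - 1 + int m + 1) + (1::real)"
      have u: "u \<noteq> 0" using odd_nz by (simp add: u_def del: of_int_diff)
      have v: "v \<noteq> 0" using odd_nz by (simp add: v_def del: of_int_add of_int_diff)
      have G: "g a m \<noteq> 0" by (rule g_nz')
      have g1: "g (a - 1) m = u * g a m / v"
        using g_Suc[of "a - 1" m] g_shift[of a m] v by (simp add: u_def v_def field_simps)
      have g2: "g (a - 1) (Suc m) = u * g a m" using g_shift[of a m] by (simp add: u_def)
      have e: "int p - int (Suc m) + int j = a - 1" "of_int (idx p (Suc m) j) = of_int a - 1 + real j"
        using 2 by (simp_all add: a_def idx_def)
      have bin: "real (Suc m) * real (m choose i) = (real (m choose i) + real (m choose j)) * real (Suc i)"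
      proof -
        have nb: "Suc m * (m choose i) = ((m choose i) + (m choose j)) * Suc i"
          using Suc_times_binomial_eq[of m i] 2 by (simp only: binomial_Suc_Suc)
        have "real (Suc m * (m choose i)) = real (((m choose i) + (m choose j)) * Suc i)" using nb by simp
        then show ?thesis by (simp only: of_nat_mult of_nat_add)
      qed
      have bin2: "real (Suc m choose j) = real (m choose i) + real (m choose j)" using 2 by simp
      have key: "real (m choose i) * v + real (m choose j) * u = real (Suc m choose j) * (2 * (of_int a - 1 + real j) + 1)"
        unfolding bin2 u_def v_def using bin 2 by (simp add: algebra_simps)
      have t1: "s * real (m choose i) / (u * g a m / v) = s * (real (m choose i) * v) / (u * g a m)"
        using u v G by simp
      have t2: "s * real (m choose j) / g a m = s * (real (m choose j) * u) / (u * g a m)"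
        using u v G by simp
      have "s * real (m choose i) / (u * g a m / v) + s * real (m choose j) / g a m
          = s * (real (m choose i) * v + real (m choose j) * u) / (u * g a m)"
        unfolding t1 t2 by (simp add: add_divide_distrib algebra_simps)
      also have "\<dots> = s * real (Suc m choose j) * (2 * (of_int a - 1 + real j) + 1) / (u * g a m)"
        unfolding key by (simp add: mult.assoc)
      finally show ?thesis unfolding cc_def e g2 s3 g1 .
    qed
    finally show ?thesis .
  qed
qed

lemma psi_cont: "continuous_on {-1..1} (psi p k)"
proof -
  have "continuous_on {-1..1} (\<lambda>x. \<Sum>j=0..k. cr p k j * Lz (idx p k j) x)"
    by (intro continuous_intros Lz_cont)
  then show ?thesis
    by (rule continuous_on_cong[THEN iffD1, rotated 2]) (auto simp: psi_expand)
qed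

lemma psi_deriv: "x \<in> {-1..1} \<Longrightarrow> (psi p (Suc k) has_real_derivative psi p k x) (at x within {-1..1})"
  unfolding psi.simps by (rule integral_has_real_derivative[OF psi_cont])

lemma psi_m1: "psi p (Suc k) (-1) = 0"
  by simp

lemma psi_1:
  assumes "Suc k \<le> p"
  shows "psi p (Suc k) 1 = 0"
proof -
  have "psi p (Suc k) 1 = integral {-1..1} (\<lambda>t. \<Sum>j=0..k. cr p k j * Lz (idx p k j) t)"
    by (simp, rule integral_cong) (auto simp: psi_expand)
  also have "\<dots> = (\<Sum>j=0..k. cr p k j * ((Lz (idx p k j + 1) 1 - Lz (idx p k j - 1) 1) / (2 * of_int (idx p k j) + 1)))"
    by (intro integral_unique has_integral_sum finite_atLeastAtMost ballI has_integral_mult_right Lz_integral) simp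
  also have "\<dots> = 0"
  proof (rule sum.neutral, rule ballI)
    fix j assume "j \<in> {0..k}"
    have "idx p k j \<ge> 1" using assms by (simp add: idx_def)
    then show "cr p k j * ((Lz (idx p k j + 1) 1 - Lz (idx p k j - 1) 1) / (2 * of_int (idx p k j) + 1)) = 0"
      by (simp add: Lz_1)
  qed
  finally show ?thesis .
qed

lemma psi_prod_int: "(\<lambda>x. psi p a x * psi p b x) integrable_on {-1..1}"
  by (intro cont_int continuous_intros psi_cont)

lemma ibp:
  assumes "Suc a \<le> p"
  shows "integral {-1..1} (\<lambda>x. psi p (Suc a) x * psi p b x) = - integral {-1..1} (\<lambda>x. psi p a x * psi p (Suc b) x)"
proof -
  define F where "F x = psi p (Suc a) x * psi p (Suc b) x" for x
  have "((\<lambda>x. psi p a x * psi p (Suc b) x + psi p (Suc a) x * psi p b x) has_integral (F 1 - F (-1))) {-1..1}"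
  proof (rule fundamental_theorem_of_calculus)
    fix x :: real assume x: "x \<in> {-1..1}"
    have "(F has_real_derivative (psi p a x * psi p (Suc b) x + psi p (Suc a) x * psi p b x)) (at x within {-1..1})"
      unfolding F_def using psi_deriv[OF x, of p a] psi_deriv[OF x, of p b]
      by (auto intro!: derivative_eq_intros)
    then show "(F has_vector_derivative (psi p a x * psi p (Suc b) x + psi p (Suc a) x * psi p b x)) (at x within {-1..1})"
      by (simp add: has_real_derivative_iff_has_vector_derivative)
  qed simp
  moreover have "F 1 = 0" "F (-1) = 0" using psi_1[OF assms] by (simp_all add: F_def)
  ultimately have "integral {-1..1} (\<lambda>x. psi p a x * psi p (Suc b) x + psi p (Suc a) x * psi p b x) = 0"
    by (simp add: integral_unique)
  then have "integral {-1..1} (\<lambda>x. psi p a x * psi p (Suc b) x) + integral {-1..1} (\<lambda>x. psi p (Suc a) x * psi p b x) = 0"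
    by (subst (asm) integral_add[OF psi_prod_int psi_prod_int])
  then show ?thesis by linarith
qed

lemma ibp_iter:
  assumes "k \<le> n" "n \<le> p"
  shows "integral {-1..1} (\<lambda>x. psi p n x * psi p n x) = (-1) ^ k * integral {-1..1} (\<lambda>x. psi p (n - k) x * psi p (n + k) x)"
  using assms(1)
proof (induction k)
  case 0 then show ?case by simp
next
  case (Suc k)
  have a: "n - k = Suc (n - Suc k)" using Suc.prems by simp
  have "integral {-1..1} (\<lambda>x. psi p (n - k) x * psi p (n + k) x)
      = - integral {-1..1} (\<lambda>x. psi p (n - Suc k) x * psi p (Suc (n + k)) x)"
    unfolding a by (rule ibp) (use Suc.prems assms(2) in simp)
  then show ?case using Suc by simp
qed

lemma Lp_Lz:
  assumes "j \<le> 2 * n"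
  shows "integral {-1..1} (\<lambda>x. legendre p x * Lz (idx p (2 * n) j) x) = (if j = n then 2 / (2 * real p + 1) else 0)"
proof (cases "j = n")
  case True
  then have "idx p (2 * n) j = int p" by (simp add: idx_def)
  then show ?thesis using True legendre_norm[of p] by (simp add: Lz_def)
next
  case False
  show ?thesis
  proof (cases "0 \<le> idx p (2 * n) j")
    case True
    have "nat (idx p (2 * n) j) \<noteq> p" using False True by (auto simp: idx_def)
    then show ?thesis using True False legendre_ortho[of p "nat (idx p (2 * n) j)"] by (simp add: Lz_def)
  next
    case F2: False
    have "nat (- idx p (2 * n) j - 1) \<noteq> p"
    proof
      assume "nat (- idx p (2 * n) j - 1) = p"
      then have "- (int p - int (2 * n) + 2 * int j) - 1 = int p" using F2 by (simp add: idx_def)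
      then show False by presburger
    qed
    then show ?thesis using F2 False legendre_ortho[of p "nat (- idx p (2 * n) j - 1)"] by (simp add: Lz_def)
  qed
qed

lemma Lp_psi2n: "integral {-1..1} (\<lambda>x. psi p 0 x * psi p (2 * n) x) = cr p (2 * n) n * (2 / (2 * real p + 1))"
proof -
  have "integral {-1..1} (\<lambda>x. psi p 0 x * psi p (2 * n) x)
      = integral {-1..1} (\<lambda>x. \<Sum>j=0..2*n. cr p (2 * n) j * (legendre p x * Lz (idx p (2 * n) j) x))"
    by (rule integral_cong) (auto simp: psi_expand sum_distrib_left algebra_simps)
  also have "\<dots> = (\<Sum>j=0..2*n. cr p (2 * n) j * integral {-1..1} (\<lambda>x. legendre p x * Lz (idx p (2 * n) j) x))"
    by (subst integral_sum) (auto intro!: cont_int continuous_intros legendre_cont Lz_cont)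
  also have "\<dots> = (\<Sum>j=0..2*n. (if j = n then cr p (2 * n) j * (2 / (2 * real p + 1)) else 0))"
    by (rule sum.cong) (auto simp: Lp_Lz)
  also have "\<dots> = cr p (2 * n) n * (2 / (2 * real p + 1))"
    by (subst sum.delta) auto
  finally show ?thesis .
qed

lemma auxA: "(t::real) \<noteq> 0 \<Longrightarrow> a * b = 1 \<Longrightarrow> a * (b * B * t / G * (2 / t)) = 2 * B / G"
proof -
  assume t: "t \<noteq> 0" and ab: "a * b = 1"
  have "a * (b * B * t / G * (2 / t)) = (a * b) * (2 * B / G) * (t / t)" by (simp add: mult_ac)
  then show ?thesis using t ab by simp
qed

lemma auxB: "(f::real) \<noteq> 0 \<Longrightarrow> (2 * real n + 2) * (2 * real n + 1) * F / (((real n + 1) * f) * ((real n + 1) * f)) = F / (f * f) * (2 * (2 * real n + 1)) / (real n + 1)"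
  apply (subst frac_eq_eq) apply simp apply simp apply (simp add: algebra_simps)
  done

lemma binom_step: "real (2 * Suc n choose Suc n) = real (2 * n choose n) * (2 * (2 * real n + 1)) / (real n + 1)"
proof -
  have a: "real (2 * n choose n) = fact (2 * n) / (fact n * fact n)"
    using binomial_fact[of n "2 * n"] by simp
  have b: "real (2 * Suc n choose Suc n) = fact (2 * Suc n) / (fact (Suc n) * fact (Suc n))"
    using binomial_fact[of "Suc n" "2 * Suc n"] by simp
  have c: "(fact (2 * Suc n) :: real) = (2 * real n + 2) * (2 * real n + 1) * fact (2 * n)"
  proof -
    have "2 * Suc n = Suc (Suc (2 * n))" by simp
    then show ?thesis by (simp only: fact_Suc) (simp add: algebra_simps)
  qed
  have d: "(fact (Suc n) :: real) = (real n + 1) * fact n" by (simp add: fact_Suc algebra_simps)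
  have f: "(fact n :: real) \<noteq> 0" by simp
  show ?thesis unfolding a b c d by (rule auxB[OF f])
qed

lemma final_id: "2 * real (2 * n choose n) / g (int p - int n) (2 * n) =
    2 ^ (n + 1) / fact n * (1 / (2 * real p + 1)) *
    (\<Prod>k = 1..n. (2 * real k - 1) / ((2 * real p + 1)^2 - 4 * (real k)^2))"
proof (induction n)
  case 0
  then show ?case by (simp add: g_def)
next
  case (Suc n)
  define X where "X = 2 * (2 * real n + 1) / ((real n + 1) * ((2 * real p + 1)^2 - 4 * (real (Suc n))^2))"
  define w1 where "w1 = 2 * of_int (int p - int n - 1) + (1::real)"
  define w2 where "w2 = 2 * of_int (int p - int n + int (2 * n) + 1) + (1::real)"
  have w1: "w1 \<noteq> 0" unfolding w1_def by (rule odd_nz)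
  have w2: "w2 \<noteq> 0" unfolding w2_def by (rule odd_nz)
  have ww: "(2 * real p + 1)^2 - 4 * (real (Suc n))^2 = w1 * w2"
    by (simp add: w1_def w2_def power2_eq_square algebra_simps)
  have G: "g (int p - int (Suc n)) (2 * Suc n) = w1 * g (int p - int n) (2 * n) * w2"
  proof -
    have "g (int p - int (Suc n)) (2 * Suc n) = g (int p - int n - 1) (Suc (Suc (2 * n)))"
      by (simp add: algebra_simps)
    also have "\<dots> = w1 * g (int p - int n) (Suc (2 * n))"
      unfolding g_shift w1_def ..
    also have "\<dots> = w1 * g (int p - int n) (2 * n) * w2"
      unfolding g_Suc w2_def by simp
    finally show ?thesis .
  qed
  have Gnz: "g (int p - int n) (2 * n) \<noteq> 0" by (rule g_nz')
  have L: "2 * real (2 * Suc n choose Suc n) / g (int p - int (Suc n)) (2 * Suc n)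
      = (2 * real (2 * n choose n) / g (int p - int n) (2 * n)) * X"
    unfolding binom_step G X_def ww using w1 w2 Gnz by (simp add: divide_simps mult_ac)
  have R: "2 ^ (Suc n + 1) / fact (Suc n) * (1 / (2 * real p + 1)) *
    (\<Prod>k = 1..Suc n. (2 * real k - 1) / ((2 * real p + 1)^2 - 4 * (real k)^2))
    = (2 ^ (n + 1) / fact n * (1 / (2 * real p + 1)) *
    (\<Prod>k = 1..n. (2 * real k - 1) / ((2 * real p + 1)^2 - 4 * (real k)^2))) * X"
  proof -
    define T where "T = 1 / (2 * real p + 1)"
    define P where "P = (\<Prod>k = 1..n. (2 * real k - 1) / ((2 * real p + 1)^2 - 4 * (real k)^2))"
    define W where "W = (2 * real p + 1)^2 - 4 * (real (Suc n))^2"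
    have W: "W \<noteq> 0" unfolding W_def ww using w1 w2 by simp
    have "2 ^ (Suc n + 1) / fact (Suc n) * T * (\<Prod>k = 1..Suc n. (2 * real k - 1) / ((2 * real p + 1)^2 - 4 * (real k)^2))
        = 2 * (2 * 2 ^ n) / ((real n + 1) * fact n) * T * ((2 * real n + 1) / W * P)"
      unfolding P_def W_def by (subst prod.nat_ivl_Suc') (simp_all add: fact_Suc algebra_simps)
    also have "\<dots> = 2 ^ (n + 1) / fact n * T * P * X"
      unfolding X_def W_def[symmetric] using W by (simp add: divide_simps mult_ac)
    finally show ?thesis unfolding T_def P_def .
  qed
  show ?case unfolding L R Suc ..
qed

theorem lemma4:
  fixes n p :: nat
  assumes "p \<ge> n"
  shows "integral {-1..1} (\<lambda>x. (psi p n x)^2) =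
    2 ^ (n + 1) / fact n * (1 / (2 * real p + 1)) *
    (\<Prod>k = 1..n. (2 * real k - 1) / ((2 * real p + 1)^2 - 4 * (real k)^2))"
proof -
  have "integral {-1..1} (\<lambda>x. (psi p n x)^2) = integral {-1..1} (\<lambda>x. psi p n x * psi p n x)"
    by (simp add: power2_eq_square)
  also have "\<dots> = (-1) ^ n * integral {-1..1} (\<lambda>x. psi p 0 x * psi p (2 * n) x)"
    using ibp_iter[of n n p] assms by (simp add: mult_2)
  also have "\<dots> = (-1) ^ n * (cc p (2 * n) n * (2 / (2 * real p + 1)))"
    using Lp_psi2n cr_cc[of n "2 * n" p] by simp
  also have "\<dots> = 2 * real (2 * n choose n) / g (int p - int n) (2 * n)"
  proof -
    have i: "idx p (2 * n) n = int p" by (simp add: idx_def)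
    have e: "int p - int (2 * n) + int n = int p - int n" by simp
    have s: "(-1::real) ^ n * (-1) ^ (2 * n - n) = 1"
      by (simp flip: power_add)
    have nz: "2 * real p + 1 \<noteq> 0" by simp
    have o: "2 * real_of_int (int p) + 1 = 2 * real p + 1" by simp
    show ?thesis unfolding cc_def i e o by (rule auxA[OF nz s])
  qed
  also note final_id
  finally show ?thesis .
qed

end
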